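(* For $n\geq 3$ and $l\in\mathbb{N}$ let $Q^n_l=\operatorname{conv}\{\,l C_{n-1}\times\{0\},\ \pm e_n\}\subset\mathbb{R}^n$, where $C_{n-1}=[-1,1]^{n-1}$ and $e_n$ is the $n$th standard unit vector. Then for every constant $c$ there exists $l\in\mathbb{N}$ such that $\mathrm{g}_{n-2}(Q^n_l)> c\,\sigma_{n-2}(Q^n_l)$. If $n\geq 4$, then likewise for every constant $c$ there exists $l\in\mathbb{N}$ such that $\mathrm{g}_{n-3}(Q^n_l)> c\,\sigma_{n-3}(Q^n_l)$.
   Context: For a lattice polytope $P\subset\mathbb{R}^n$ (all vertices in $\mathbb{Z}^n$) of dimension $n$, the function $k\mapsto \mathrm{G}(kP)=\#(kP\cap\mathbb{Z}^n)$, $k\in\mathbb{N}$, is a polynomial of degree $n$ (Ehrhart); write $\mathrm{G}(kP)=\sum_{i=0}^n \mathrm{g}_i(P)k^i$. For a $0$-symmetric convex body $K\subset\mathbb{R}^n$ (compact, convex, nonempty interior) and a lattice $\Lambda$, the successive minima are $\lambda_i(K,\Lambda)=\min\{\lambda>0:\dim(\lambda K\cap\Lambda)\geq i\}$, $1\le i\le n$, where $\dim$ is the dimension of the affine hull; $\lambda_i(K)=\lambda_i(K,\mathbb{Z}^n)$. For a polytope $P$, $DP=P-P$ and $\sigma_i(P)=\sigma_i\big(1/\lambda_1(DP),\dots,1/\lambda_n(DP)\big)$, where $\sigma_i(x_1,\dots,x_n)=\sum_{I\subseteq\{1,\dots,n\},\#I=i}\prod_{j\in I}x_j$ is the $i$th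 elementary symmetric polynomial. *)

theory Defs
  imports "HOL-Analysis.Analysis"
begin

definition int_lattice :: "(real ^ 'n) set" where
  "int_lattice = {x. \<forall>i. x $ i \<in> \<int>}"

definition lattice_count :: "(real ^ 'n) set \<Rightarrow> nat" where
  "lattice_count K = card (K \<inter> int_lattice)"

definition ehrhart_coeff :: "(real ^ 'n) set \<Rightarrow> nat \<Rightarrow> real" where
  "ehrhart_coeff P i = (THE c. \<exists>a :: nat \<Rightarrow> real.
      (\<forall>k::nat. real (lattice_count ((\<lambda>v. real k *\<^sub>R v) ` P)) = (\<Sum>j\<le>CARD('n). a j * real k ^ j))
      \<and> a i = c)"

definition succ_min :: "(real ^ 'n) set \<Rightarrow> nat \<Rightarrow> real" where
  "succ_min K i = Inf {t. t > 0 \<and> aff_dim (((\<lambda>v. t *\<^sub>R v) ` K) \<inter> int_lattice) \<ge> int i}"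

definition diff_body :: "(real ^ 'n) set \<Rightarrow> (real ^ 'n) set" where
  "diff_body P = {x - y | x y. x \<in> P \<and> y \<in> P}"

definition elem_sym :: "nat \<Rightarrow> (nat \<Rightarrow> real) \<Rightarrow> nat \<Rightarrow> real" where
  "elem_sym n x i = (\<Sum>I\<in>{I. I \<subseteq> {1..n} \<and> card I = i}. \<Prod>j\<in>I. x j)"

definition sigma_sm :: "(real ^ 'n) set \<Rightarrow> nat \<Rightarrow> real" where
  "sigma_sm P i = elem_sym CARD('n) (\<lambda>j. 1 / succ_min (diff_body P) j) i"

text \<open>Q^n_l = conv{ l C_{n-1} x {0}, +-e_k }, with the distinguished coordinate k playing
  the role of the n-th coordinate.\<close>
definition Q_poly :: "'n \<Rightarrow> nat \<Rightarrow> (real ^ 'n) set" where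
  "Q_poly k l = convex hull ({x. x $ k = 0 \<and> (\<forall>j. j \<noteq> k \<longrightarrow> \<bar>x $ j\<bar> \<le> real l)}
                              \<union> {axis k 1, axis k (-1)})"

end

theory Submission
  imports Defs "HOL-Computational_Algebra.Polynomial"
begin


lemma coeffs_unique:
  fixes a b :: "nat \<Rightarrow> real"
  assumes h: "\<And>s::nat. (\<Sum>i\<le>N. a i * real s ^ i) = (\<Sum>i\<le>N. b i * real s ^ i)" and j: "j \<le> N"
  shows "a j = b j"
proof -
  define P where "P = (\<Sum>i\<le>N. monom (a i - b i) i)"
  have ev: "poly P x = (\<Sum>i\<le>N. (a i - b i) * x ^ i)" for x
    by (simp add: P_def poly_sum poly_monom)
  have "range real \<subseteq> {x. poly P x = 0}"
    using h by (auto simp: ev algebra_simps sum_subtractf)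
  moreover have "infinite (range (real :: nat \<Rightarrow> real))"
    using range_inj_infinite[of real] by (simp add: inj_on_def)
  ultimately have "infinite {x. poly P x = 0}" using finite_subset by blast
  hence "P = 0" using poly_roots_finite by blast
  hence "coeff P j = 0" by simp
  moreover have "coeff P j = a j - b j"
    using j by (simp add: P_def coeff_sum coeff_monom)
  ultimately show ?thesis by simp
qed

lemma faulhaber_exists:
  assumes "p < N"
  shows "\<exists>c. \<forall>s::nat. (\<Sum>m<s. real m ^ p) = (\<Sum>i\<le>N. c i * real s ^ i)"
  using assms
proof (induction p rule: less_induct)
  case (less p)
  have "\<forall>q. \<exists>c. q < p \<longrightarrow> (\<forall>s::nat. (\<Sum>m<s. real m ^ q) = (\<Sum>i\<le>N. c i * real s ^ i))"
    using less by auto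
  then obtain C where C: "\<And>q s. q < p \<Longrightarrow> (\<Sum>m<s. real m ^ q) = (\<Sum>i\<le>N. C q i * real s ^ i)"
    by metis
  define c where "c i = ((if i = Suc p then 1 else 0) - (\<Sum>q<p. real (Suc p choose q) * C q i)) / real (Suc p)" for i
  have tele: "real s ^ Suc p = (\<Sum>q\<le>p. real (Suc p choose q) * (\<Sum>m<s. real m ^ q))" for s :: nat
  proof -
    have "real s ^ Suc p = (\<Sum>m<s. real (Suc m) ^ Suc p - real m ^ Suc p)"
      using sum_lessThan_telescope[of "\<lambda>m. real m ^ Suc p" s] by simp
    also have "\<dots> = (\<Sum>m<s. \<Sum>q\<le>p. real (Suc p choose q) * real m ^ q)"
    proof (rule sum.cong[OF refl])
      fix m
      have "real (Suc m) ^ Suc p = (\<Sum>q\<le>Suc p. real (Suc p choose q) * real m ^ q)"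
        using binomial_ring[of "real m" 1 "Suc p"] by (simp add: add.commute)
      thus "real (Suc m) ^ Suc p - real m ^ Suc p = (\<Sum>q\<le>p. real (Suc p choose q) * real m ^ q)"
        by simp
    qed
    also have "\<dots> = (\<Sum>q\<le>p. real (Suc p choose q) * (\<Sum>m<s. real m ^ q))"
      by (subst sum.swap) (simp add: sum_distrib_left)
    finally show ?thesis .
  qed
  show ?case
  proof (intro exI allI)
    fix s :: nat
    have "real (Suc p) * (\<Sum>m<s. real m ^ p) = real s ^ Suc p - (\<Sum>q<p. real (Suc p choose q) * (\<Sum>m<s. real m ^ q))"
      using tele[of s] by (simp add: lessThan_Suc_atMost[symmetric])
    also have "\<dots> = real s ^ Suc p - (\<Sum>q<p. real (Suc p choose q) * (\<Sum>i\<le>N. C q i * real s ^ i))"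
      using C by simp
    also have "\<dots> = (\<Sum>i\<le>N. ((if i = Suc p then 1 else 0) - (\<Sum>q<p. real (Suc p choose q) * C q i)) * real s ^ i)"
    proof -
      have "(\<Sum>i\<le>N. (if i = Suc p then 1 else 0) * real s ^ i) = real s ^ Suc p"
      proof -
        have "(\<Sum>i\<le>N. (if i = Suc p then 1 else 0) * real s ^ i) = (\<Sum>i\<le>N. if i = Suc p then real s ^ i else 0)"
          by (rule sum.cong) auto
        also have "\<dots> = real s ^ Suc p" using less.prems by simp
        finally show ?thesis .
      qed
      moreover have "(\<Sum>q<p. real (Suc p choose q) * (\<Sum>i\<le>N. C q i * real s ^ i))
          = (\<Sum>i\<le>N. (\<Sum>q<p. real (Suc p choose q) * C q i) * real s ^ i)"
        unfolding sum_distrib_left sum_distrib_right by (rule sum.swap[THEN trans]) (simp add: mult_ac)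
      ultimately show ?thesis by (simp add: algebra_simps sum_subtractf)
    qed
    also have "\<dots> = real (Suc p) * (\<Sum>i\<le>N. c i * real s ^ i)"
      by (simp add: c_def sum_distrib_left)
    finally show "(\<Sum>m<s. real m ^ p) = (\<Sum>i\<le>N. c i * real s ^ i)"
      by (simp del: of_nat_Suc)
  qed
qed

lemma binom_expand:
  fixes u x :: real
  shows "(u * x + 1) ^ p = (\<Sum>t\<le>p. real (p choose t) * u ^ t * x ^ t)"
  using binomial_ring[of "u * x" 1 p] by (simp add: power_mult_distrib mult_ac)

lemma G_poly_exists:
  fixes u :: real
  shows "\<exists>a. \<forall>s::nat. (u * real s + 1) ^ p + 2 * (\<Sum>m<s. (u * real m + 1) ^ p)
             = (\<Sum>i\<le>Suc p. a i * real s ^ i)"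
proof -
  have "\<forall>t. \<exists>c. t \<le> p \<longrightarrow> (\<forall>s::nat. (\<Sum>m<s. real m ^ t) = (\<Sum>i\<le>Suc p. c i * real s ^ i))"
    using faulhaber_exists[of _ "Suc p"] by auto
  then obtain C where C: "\<And>t s. t \<le> p \<Longrightarrow> (\<Sum>m<s. real m ^ t) = (\<Sum>i\<le>Suc p. C t i * real s ^ i)"
    by metis
  define d where "d t = real (p choose t) * u ^ t" for t
  define a where "a i = (if i \<le> p then d i else 0) + 2 * (\<Sum>t\<le>p. d t * C t i)" for i
  show ?thesis
  proof (intro exI allI)
    fix s :: nat
    have 1: "(u * real s + 1) ^ p = (\<Sum>i\<le>Suc p. (if i \<le> p then d i else 0) * real s ^ i)"
      by (simp add: binom_expand d_def)
    have "(\<Sum>m<s. (u * real m + 1) ^ p) = (\<Sum>m<s. \<Sum>t\<le>p. d t * real m ^ t)"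
      by (simp add: binom_expand d_def)
    also have "\<dots> = (\<Sum>t\<le>p. d t * (\<Sum>m<s. real m ^ t))"
      by (subst sum.swap) (simp add: sum_distrib_left)
    also have "\<dots> = (\<Sum>t\<le>p. d t * (\<Sum>i\<le>Suc p. C t i * real s ^ i))"
      using C by simp
    also have "\<dots> = (\<Sum>i\<le>Suc p. (\<Sum>t\<le>p. d t * C t i) * real s ^ i)"
      unfolding sum_distrib_left sum_distrib_right by (rule sum.swap[THEN trans]) (simp add: mult_ac)
    finally have 2: "(\<Sum>m<s. (u * real m + 1) ^ p) = \<dots>" .
    show "(u * real s + 1) ^ p + 2 * (\<Sum>m<s. (u * real m + 1) ^ p) = (\<Sum>i\<le>Suc p. a i * real s ^ i)"
      unfolding 1 2 a_def by (simp add: sum_distrib_left algebra_simps sum.distrib)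
  qed
qed

lemma G_diff_coeffs:
  fixes u :: real
  assumes h: "\<And>s::nat. (u * real s + 1) ^ p + 2 * (\<Sum>m<s. (u * real m + 1) ^ p)
             = (\<Sum>i\<le>Suc p. a i * real s ^ i)"
  assumes t: "t \<le> Suc p"
  shows "(\<Sum>i\<le>Suc p. if t < i then a i * real (i choose t) else 0)
       = real (p choose t) * u ^ t * ((1 + u) ^ (p - t) + 1)"
proof -
  define e where "e t = (\<Sum>i\<le>Suc p. if t < i then a i * real (i choose t) else 0)" for t
  define d where "d t = real (p choose t) * u ^ t * ((1 + u) ^ (p - t) + 1)" for t
  have L: "(\<Sum>i\<le>Suc p. a i * real (Suc s) ^ i) - (\<Sum>i\<le>Suc p. a i * real s ^ i)
      = (\<Sum>t\<le>Suc p. e t * real s ^ t)" for s :: nat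
  proof -
    have "(\<Sum>i\<le>Suc p. a i * real (Suc s) ^ i) - (\<Sum>i\<le>Suc p. a i * real s ^ i)
        = (\<Sum>i\<le>Suc p. a i * (real (Suc s) ^ i - real s ^ i))"
      by (simp add: sum_subtractf algebra_simps)
    also have "\<dots> = (\<Sum>i\<le>Suc p. a i * (\<Sum>t\<le>Suc p. if t < i then real (i choose t) * real s ^ t else 0))"
    proof (rule sum.cong[OF refl])
      fix i assume i: "i \<in> {..Suc p}"
      have "real (Suc s) ^ i = (\<Sum>t\<le>i. real (i choose t) * real s ^ t)"
        using binomial_ring[of "real s" 1 i] by (simp add: add.commute)
      also have "\<dots> = (\<Sum>t<i. real (i choose t) * real s ^ t) + real s ^ i"
        by (simp add: lessThan_Suc_atMost[symmetric])
      finally have "real (Suc s) ^ i - real s ^ i = (\<Sum>t<i. real (i choose t) * real s ^ t)" by simp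
      also have "\<dots> = (\<Sum>t\<le>Suc p. if t < i then real (i choose t) * real s ^ t else 0)"
        using i by (intro sum.mono_neutral_cong_left) auto
      finally show "a i * (real (Suc s) ^ i - real s ^ i) = a i * (\<Sum>t\<le>Suc p. if t < i then real (i choose t) * real s ^ t else 0)"
        by simp
    qed
    also have "\<dots> = (\<Sum>t\<le>Suc p. e t * real s ^ t)"
      unfolding e_def sum_distrib_left sum_distrib_right
      by (rule sum.swap[THEN trans]) (auto intro!: sum.cong simp: mult_ac)
    finally show ?thesis .
  qed
  have R: "(u * real (Suc s) + 1) ^ p + (u * real s + 1) ^ p = (\<Sum>t\<le>Suc p. d t * real s ^ t)" for s :: nat
  proof -
    have "(u * real (Suc s) + 1) ^ p = (u * real s + (1 + u)) ^ p" by (simp add: algebra_simps)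
    also have "\<dots> = (\<Sum>t\<le>p. real (p choose t) * u ^ t * (1 + u) ^ (p - t) * real s ^ t)"
      using binomial_ring[of "u * real s" "1 + u" p] by (simp add: power_mult_distrib mult_ac)
    finally have A: "(u * real (Suc s) + 1) ^ p = (\<Sum>t\<le>p. real (p choose t) * u ^ t * (1 + u) ^ (p - t) * real s ^ t)" .
    have "(u * real (Suc s) + 1) ^ p + (u * real s + 1) ^ p
        = (\<Sum>t\<le>p. d t * real s ^ t)"
      unfolding A binom_expand[of u "real s" p] d_def sum.distrib[symmetric] by (rule sum.cong) (simp_all add: algebra_simps)
    also have "\<dots> = (\<Sum>t\<le>Suc p. d t * real s ^ t)"
      by (simp add: d_def)
    finally show ?thesis .
  qed
  have "\<And>s::nat. (\<Sum>t\<le>Suc p. e t * real s ^ t) = (\<Sum>t\<le>Suc p. d t * real s ^ t)"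
  proof -
    fix s :: nat
    have "(\<Sum>t\<le>Suc p. e t * real s ^ t) = (\<Sum>i\<le>Suc p. a i * real (Suc s) ^ i) - (\<Sum>i\<le>Suc p. a i * real s ^ i)"
      using L by simp
    also have "\<dots> = (u * real (Suc s) + 1) ^ p + 2 * (\<Sum>m<Suc s. (u * real m + 1) ^ p)
         - ((u * real s + 1) ^ p + 2 * (\<Sum>m<s. (u * real m + 1) ^ p))"
      by (simp only: h)
    also have "\<dots> = (u * real (Suc s) + 1) ^ p + (u * real s + 1) ^ p"
      by simp
    finally show "(\<Sum>t\<le>Suc p. e t * real s ^ t) = (\<Sum>t\<le>Suc p. d t * real s ^ t)" using R by simp
  qed
  from coeffs_unique[OF this t] show ?thesis by (simp add: e_def d_def)
qed

lemma sum_if_zero: "(q::nat) \<le> m \<Longrightarrow> (\<Sum>i\<le>q. if m < i then f i else (0::real)) = 0"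
proof (intro sum.neutral ballI)
  fix x assume "q \<le> m" "x \<in> {..q}"
  hence "x \<le> q" by simp
  with \<open>q \<le> m\<close> have "\<not> m < x" by linarith
  thus "(if m < x then f x else 0) = 0" by simp
qed

lemma fact3: "fact 3 = (6::real)" by (simp add: numeral_3_eq_3)
lemma fact4: "fact 4 = (24::real)" by (simp add: fact_numeral)

lemma choose2: "real (Suc (Suc q) choose q) = real (q + 2) * real (q + 1) / 2"
  by (simp add: binomial_fact field_simps)
lemma choose3: "real (Suc (Suc (Suc q)) choose q) = real (q + 3) * real (q + 2) * real (q + 1) / 6"
  by (simp add: binomial_fact field_simps fact3)
lemma choose4: "real (Suc (Suc (Suc (Suc q))) choose q) = real (q + 4) * real (q + 3) * real (q + 2) * real (q + 1) / 24"
  by (simp add: binomial_fact field_simps fact4)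

lemma coeff_nm2:
  fixes u :: real
  assumes h: "\<And>s::nat. (u * real s + 1) ^ Suc (Suc q) + 2 * (\<Sum>m<s. (u * real m + 1) ^ Suc (Suc q))
             = (\<Sum>i\<le>Suc (Suc (Suc q)). a i * real s ^ i)"
  shows "a (Suc q) = real (q + 2) * u ^ q * (u ^ 2 / 6 + 1)"
proof -
  note E1 = G_diff_coeffs[OF h, of "Suc (Suc q)"]
  note E2 = G_diff_coeffs[OF h, of "Suc q"]
  note E3 = G_diff_coeffs[OF h, of "q"]
  have e1: "a (Suc (Suc (Suc q))) * (real q + 3) = 2 * u ^ q * u^2"
    using E1 by (simp add: sum_if_zero power_add power2_eq_square algebra_simps)
  have e2: "a (Suc (Suc q)) * (real q + 2) + a (Suc (Suc (Suc q))) * ((real q + 3) * (real q + 2) / 2) = (real q + 2) * u ^ q * u * (2 + u)"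
    using E2 by (simp add: sum_if_zero power_add choose2 field_simps power2_eq_square power3_eq_cube)
  have e3: "a (Suc q) * (real q + 1) + a (Suc (Suc q)) * ((real q + 2) * (real q + 1) / 2)
     + a (Suc (Suc (Suc q))) * ((real q + 3) * (real q + 2) * (real q + 1) / 6)
     = (real q + 2) * (real q + 1) / 2 * u ^ q * ((1 + u)^2 + 1)"
    using E3 by (simp add: sum_if_zero power_add choose2 choose3 field_simps power2_eq_square power3_eq_cube)
  define U where "U = u ^ q"
  have X2: "a (Suc (Suc (Suc q))) * ((real q + 3) * (real q + 2) / 2) = (real q + 2) * U * u^2"
  proof -
    have "a (Suc (Suc (Suc q))) * ((real q + 3) * (real q + 2) / 2) = (a (Suc (Suc (Suc q))) * (real q + 3)) * (real q + 2) / 2"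
      by (simp add: algebra_simps)
    also have "\<dots> = (real q + 2) * U * u^2" unfolding e1 U_def by simp
    finally show ?thesis .
  qed
  have a2: "a (Suc (Suc q)) = 2 * U * u"
  proof -
    have "a (Suc (Suc q)) * (real q + 2) = (real q + 2) * U * u * (2 + u) - (real q + 2) * U * u^2"
      using e2 X2 unfolding U_def by linarith
    also have "\<dots> = (real q + 2) * (2 * U * u)" by (simp add: algebra_simps power2_eq_square)
    finally show ?thesis by simp
  qed
  have X3: "a (Suc (Suc (Suc q))) * ((real q + 3) * (real q + 2) * (real q + 1) / 6) = (real q + 2) * (real q + 1) / 3 * U * u^2"
  proof -
    have "a (Suc (Suc (Suc q))) * ((real q + 3) * (real q + 2) * (real q + 1) / 6) = (a (Suc (Suc (Suc q))) * (real q + 3)) * ((real q + 2) * (real q + 1) / 6)"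
      by (simp add: algebra_simps)
    also have "\<dots> = (real q + 2) * (real q + 1) / 3 * U * u^2" unfolding e1 U_def by simp
    finally show ?thesis .
  qed
  have "a (Suc q) * (real q + 1) = (real q + 2) * (real q + 1) / 2 * U * ((1 + u)^2 + 1)
       - 2 * U * u * ((real q + 2) * (real q + 1) / 2) - (real q + 2) * (real q + 1) / 3 * U * u^2"
    using e3[unfolded a2] X3 unfolding U_def by linarith
  also have "\<dots> = (real q + 1) * (real (q + 2) * U * (u ^ 2 / 6 + 1))"
    by (simp add: field_simps power2_eq_square)
  finally have "a (Suc q) * (real q + 1) = (real q + 1) * (real (q + 2) * U * (u ^ 2 / 6 + 1))" .
  thus ?thesis unfolding U_def by simp
qed

lemma coeff_nm3:
  fixes u :: real
  assumes h: "\<And>s::nat. (u * real s + 1) ^ Suc (Suc (Suc q)) + 2 * (\<Sum>m<s. (u * real m + 1) ^ Suc (Suc (Suc q)))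
             = (\<Sum>i\<le>Suc (Suc (Suc (Suc q))). a i * real s ^ i)"
  shows "a (Suc q) = real (q + 3) * real (q + 2) * u ^ q * (u ^ 2 / 6 + 1 / 3)"
proof -
  note E1 = G_diff_coeffs[OF h, of "Suc (Suc (Suc q))"]
  note E2 = G_diff_coeffs[OF h, of "Suc (Suc q)"]
  note E3 = G_diff_coeffs[OF h, of "Suc q"]
  note E4 = G_diff_coeffs[OF h, of "q"]
  define U where "U = u ^ q"
  define a1 a2 a3 a4 where "a1 = a (Suc q)" "a2 = a (Suc (Suc q))" "a3 = a (Suc (Suc (Suc q)))" "a4 = a (Suc (Suc (Suc (Suc q))))"
  have e1: "a4 * (real q + 4) = 2 * U * u^3"
    using E1 unfolding a1_a2_a3_a4_def U_def by (simp add: sum_if_zero power_add field_simps power3_eq_cube)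
  have e2: "a3 * (real q + 3) + a4 * ((real q + 4) * (real q + 3) / 2) = (real q + 3) * U * u^2 * (2 + u)"
    using E2 unfolding a1_a2_a3_a4_def U_def by (simp add: sum_if_zero power_add choose2 field_simps power2_eq_square power3_eq_cube)
  have e3: "a2 * (real q + 2) + a3 * ((real q + 3) * (real q + 2) / 2) + a4 * ((real q + 4) * (real q + 3) * (real q + 2) / 6)
     = (real q + 3) * (real q + 2) / 2 * U * u * ((1 + u)^2 + 1)"
    using E3 unfolding a1_a2_a3_a4_def U_def by (simp add: sum_if_zero power_add choose2 choose3 field_simps power2_eq_square power3_eq_cube)
  have e4: "a1 * (real q + 1) + a2 * ((real q + 2) * (real q + 1) / 2) + a3 * ((real q + 3) * (real q + 2) * (real q + 1) / 6)
     + a4 * ((real q + 4) * (real q + 3) * (real q + 2) * (real q + 1) / 24)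
     = (real q + 3) * (real q + 2) * (real q + 1) / 6 * U * ((1 + u)^3 + 1)"
    using E4 unfolding a1_a2_a3_a4_def U_def by (simp add: sum_if_zero power_add choose2 choose3 choose4 field_simps power2_eq_square power3_eq_cube)
  have X2: "a4 * ((real q + 4) * (real q + 3) / 2) = (real q + 3) * U * u^3"
  proof -
    have "a4 * ((real q + 4) * (real q + 3) / 2) = (a4 * (real q + 4)) * (real q + 3) / 2"
      by (simp add: algebra_simps)
    also have "\<dots> = (real q + 3) * U * u^3" unfolding e1 by simp
    finally show ?thesis .
  qed
  have a3: "a3 = 2 * U * u^2"
  proof -
    have "a3 * (real q + 3) = (real q + 3) * U * u^2 * (2 + u) - (real q + 3) * U * u^3"
      using e2 X2 by linarith
    also have "\<dots> = (real q + 3) * (2 * U * u^2)" by (simp add: algebra_simps power2_eq_square power3_eq_cube)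
    finally show ?thesis by simp
  qed
  have X3: "a4 * ((real q + 4) * (real q + 3) * (real q + 2) / 6) = (real q + 3) * (real q + 2) / 3 * U * u^3"
  proof -
    have "a4 * ((real q + 4) * (real q + 3) * (real q + 2) / 6) = (a4 * (real q + 4)) * ((real q + 3) * (real q + 2) / 6)"
      by (simp add: algebra_simps)
    also have "\<dots> = (real q + 3) * (real q + 2) / 3 * U * u^3" unfolding e1 by simp
    finally show ?thesis .
  qed
  have a2: "a2 = (real q + 3) * U * u * (u ^ 2 / 6 + 1)"
  proof -
    have "a2 * (real q + 2) = (real q + 3) * (real q + 2) / 2 * U * u * ((1 + u)^2 + 1)
       - 2 * U * u^2 * ((real q + 3) * (real q + 2) / 2) - (real q + 3) * (real q + 2) / 3 * U * u^3"
      using e3[unfolded a3] X3 by linarith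
    also have "\<dots> = (real q + 2) * ((real q + 3) * U * u * (u ^ 2 / 6 + 1))"
      by (simp add: field_simps power2_eq_square power3_eq_cube)
    finally show ?thesis by simp
  qed
  have X4: "a4 * ((real q + 4) * (real q + 3) * (real q + 2) * (real q + 1) / 24) = (real q + 3) * (real q + 2) * (real q + 1) / 12 * U * u^3"
  proof -
    have "a4 * ((real q + 4) * (real q + 3) * (real q + 2) * (real q + 1) / 24) = (a4 * (real q + 4)) * ((real q + 3) * (real q + 2) * (real q + 1) / 24)"
      by (simp add: algebra_simps)
    also have "\<dots> = (real q + 3) * (real q + 2) * (real q + 1) / 12 * U * u^3" unfolding e1 by simp
    finally show ?thesis .
  qed
  have "a1 * (real q + 1) = (real q + 3) * (real q + 2) * (real q + 1) / 6 * U * ((1 + u)^3 + 1)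
     - (real q + 3) * U * u * (u ^ 2 / 6 + 1) * ((real q + 2) * (real q + 1) / 2)
     - 2 * U * u^2 * ((real q + 3) * (real q + 2) * (real q + 1) / 6)
     - (real q + 3) * (real q + 2) * (real q + 1) / 12 * U * u^3"
    using e4[unfolded a3 a2] X4 by linarith
  also have "\<dots> = (real q + 1) * (real (q + 3) * real (q + 2) * U * (u ^ 2 / 6 + 1 / 3))"
    by (simp add: field_simps power2_eq_square power3_eq_cube)
  finally have "a1 * (real q + 1) = (real q + 1) * (real (q + 3) * real (q + 2) * U * (u ^ 2 / 6 + 1 / 3))" .
  thus ?thesis unfolding U_def a1_a2_a3_a4_def by simp
qed



definition Rset :: "'n::finite \<Rightarrow> nat \<Rightarrow> real \<Rightarrow> (real ^ 'n) set" where
  "Rset k l s = {x. \<bar>x $ k\<bar> \<le> s \<and> (\<forall>j. j \<noteq> k \<longrightarrow> \<bar>x $ j\<bar> \<le> real l * (s - \<bar>x $ k\<bar>))}"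

lemma abs_comb: fixes u v a b :: real shows "0 \<le> u \<Longrightarrow> 0 \<le> v \<Longrightarrow> \<bar>u * a + v * b\<bar> \<le> u * \<bar>a\<bar> + v * \<bar>b\<bar>"
proof -
  assume "0 \<le> u" "0 \<le> v"
  have "\<bar>u * a + v * b\<bar> \<le> \<bar>u * a\<bar> + \<bar>v * b\<bar>" by (rule abs_triangle_ineq)
  also have "\<dots> = u * \<bar>a\<bar> + v * \<bar>b\<bar>" using \<open>0 \<le> u\<close> \<open>0 \<le> v\<close> by (simp add: abs_mult)
  finally show ?thesis .
qed

lemma convex_Rset: "convex (Rset k l 1)"
  unfolding convex_def
proof (intro ballI allI impI)
  fix x y :: "real ^ 'a" and u v :: real
  assume x: "x \<in> Rset k l 1" and y: "y \<in> Rset k l 1" and uv: "0 \<le> u" "0 \<le> v" "u + v = 1"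
  have xk: "\<bar>x $ k\<bar> \<le> 1" and yk: "\<bar>y $ k\<bar> \<le> 1" using x y by (auto simp: Rset_def)
  have ck: "\<bar>u * x $ k + v * y $ k\<bar> \<le> u * \<bar>x $ k\<bar> + v * \<bar>y $ k\<bar>" using abs_comb uv by blast
  have "u * \<bar>x $ k\<bar> + v * \<bar>y $ k\<bar> \<le> u * 1 + v * 1"
    using xk yk uv by (intro add_mono mult_left_mono) auto
  hence k1: "\<bar>u * x $ k + v * y $ k\<bar> \<le> 1" using ck uv by linarith
  have "\<bar>u * x $ j + v * y $ j\<bar> \<le> real l * (1 - \<bar>u * x $ k + v * y $ k\<bar>)" if j: "j \<noteq> k" for j
  proof -
    have xj: "\<bar>x $ j\<bar> \<le> real l * (1 - \<bar>x $ k\<bar>)" and yj: "\<bar>y $ j\<bar> \<le> real l * (1 - \<bar>y $ k\<bar>)"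
      using x y j by (auto simp: Rset_def)
    have "\<bar>u * x $ j + v * y $ j\<bar> \<le> u * \<bar>x $ j\<bar> + v * \<bar>y $ j\<bar>" using abs_comb uv by blast
    also have "\<dots> \<le> u * (real l * (1 - \<bar>x $ k\<bar>)) + v * (real l * (1 - \<bar>y $ k\<bar>))"
      using xj yj uv by (intro add_mono mult_left_mono) auto
    also have "\<dots> = real l * ((u + v) - (u * \<bar>x $ k\<bar> + v * \<bar>y $ k\<bar>))" by (simp add: algebra_simps)
    also have "\<dots> = real l * (1 - (u * \<bar>x $ k\<bar> + v * \<bar>y $ k\<bar>))" using uv by simp
    also have "\<dots> \<le> real l * (1 - \<bar>u * x $ k + v * y $ k\<bar>)"
      using ck by (intro mult_left_mono) auto
    finally show ?thesis .
  qed
  thus "u *\<^sub>R x + v *\<^sub>R y \<in> Rset k l 1" using k1 by (simp add: Rset_def)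
qed

lemma Q_eq: "Q_poly k l = Rset k l 1"
proof
  show "Q_poly k l \<subseteq> Rset k l 1"
    unfolding Q_poly_def
  proof (rule hull_minimal)
    show "{x. x $ k = 0 \<and> (\<forall>j. j \<noteq> k \<longrightarrow> \<bar>x $ j\<bar> \<le> real l)} \<union> {axis k 1, axis k (- 1)} \<subseteq> Rset k l 1"
      by (auto simp: Rset_def axis_def)
  qed (rule convex_Rset)
  show "Rset k l 1 \<subseteq> Q_poly k l"
  proof
    fix x assume x: "x \<in> Rset k l 1"
    define h where "h = x $ k"
    have h1: "\<bar>h\<bar> \<le> 1" and xj: "\<And>j. j \<noteq> k \<Longrightarrow> \<bar>x $ j\<bar> \<le> real l * (1 - \<bar>h\<bar>)"
      using x by (auto simp: Rset_def h_def)
    define S where "S = {x. x $ k = 0 \<and> (\<forall>j. j \<noteq> k \<longrightarrow> \<bar>x $ j\<bar> \<le> real l)} \<union> {axis k 1, axis k (- 1 :: real)}"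
    have QS: "Q_poly k l = convex hull S" unfolding Q_poly_def S_def ..
    define z :: "real ^ 'a" where "z = (if h \<ge> 0 then axis k 1 else axis k (-1))"
    have zS: "z \<in> convex hull S" unfolding z_def S_def by (auto intro: hull_inc)
    show "x \<in> Q_poly k l"
    proof (cases "\<bar>h\<bar> = 1")
      case True
      hence "x = (\<chi> j. if j = k then h else 0)"
        using xj by (auto simp: vec_eq_iff h_def)
      also have "\<dots> = z" using True by (auto simp: z_def vec_eq_iff axis_def)
      finally show ?thesis using zS QS by simp
    next
      case False
      hence hl: "\<bar>h\<bar> < 1" using h1 by simp
      define y :: "real ^ 'a" where "y = (\<chi> j. if j = k then 0 else x $ j / (1 - \<bar>h\<bar>))"
      have "y \<in> S"
      proof -
        have "\<bar>x $ j\<bar> / (1 - \<bar>h\<bar>) \<le> real l" if "j \<noteq> k" for j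
          using xj[OF that] hl by (simp add: divide_le_eq mult.commute)
        moreover have "\<bar>1 - \<bar>h\<bar>\<bar> = 1 - \<bar>h\<bar>" using hl by simp
        ultimately show ?thesis by (auto simp: S_def y_def)
      qed
      hence yS: "y \<in> convex hull S" by (rule hull_inc)
      have "x = (1 - \<bar>h\<bar>) *\<^sub>R y + \<bar>h\<bar> *\<^sub>R z"
        using hl by (auto simp: vec_eq_iff y_def z_def axis_def h_def)
      moreover have "(1 - \<bar>h\<bar>) *\<^sub>R y + \<bar>h\<bar> *\<^sub>R z \<in> convex hull S"
        using hl yS zS by (intro convexD[OF convex_convex_hull]) auto
      ultimately show ?thesis using QS by simp
    qed
  qed
qed

lemma Rset_0: "Rset k l 0 = {0}"
proof -
  have "x = 0" if "x \<in> Rset k l 0" for x :: "real ^ 'a"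
  proof -
    have xk: "x $ k = 0" using that by (simp add: Rset_def)
    have "x $ j = 0" for j
    proof (cases "j = k")
      case False
      hence "\<bar>x $ j\<bar> \<le> real l * (0 - \<bar>x $ k\<bar>)" using that unfolding Rset_def by blast
      thus ?thesis using xk by simp
    qed (simp add: xk)
    thus ?thesis by (simp add: vec_eq_iff)
  qed
  moreover have "0 \<in> Rset k l 0" by (simp add: Rset_def)
  ultimately show ?thesis by blast
qed

lemma scale_Rset: "(\<lambda>v. real s *\<^sub>R v) ` Rset k l 1 = Rset k l (real s)"
proof (cases "s = 0")
  case True
  have "0 \<in> Rset k l 1" by (simp add: Rset_def)
  hence "(\<lambda>v. 0 *\<^sub>R v) ` Rset k l 1 = {0::real^'a}" by auto
  thus ?thesis using True by (simp add: Rset_0)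
next
  case False
  define c where "c = real s"
  have c: "c > 0" using False by (simp add: c_def)
  show ?thesis unfolding c_def[symmetric]
  proof (intro set_eqI iffI)
    fix x assume "x \<in> (\<lambda>v. c *\<^sub>R v) ` Rset k l 1"
    then obtain y where y: "y \<in> Rset k l 1" and x: "x = c *\<^sub>R y" by auto
    have "\<bar>x $ k\<bar> = c * \<bar>y $ k\<bar>" using c x by (simp add: abs_mult)
    moreover have "\<bar>y $ k\<bar> \<le> 1" using y by (simp add: Rset_def)
    ultimately have xk: "\<bar>x $ k\<bar> \<le> c" using c by (simp add: mult_le_cancel_left1)
    have "\<bar>x $ j\<bar> \<le> real l * (c - \<bar>x $ k\<bar>)" if j: "j \<noteq> k" for j
    proof -
      have "\<bar>y $ j\<bar> \<le> real l * (1 - \<bar>y $ k\<bar>)" using y j by (simp add: Rset_def)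
      hence "c * \<bar>y $ j\<bar> \<le> c * (real l * (1 - \<bar>y $ k\<bar>))" using c by simp
      thus ?thesis using c x by (simp add: abs_mult algebra_simps)
    qed
    thus "x \<in> Rset k l c" using xk by (simp add: Rset_def)
  next
    fix x assume x: "x \<in> Rset k l c"
    define y where "y = (1 / c) *\<^sub>R x"
    have "\<bar>y $ k\<bar> \<le> 1" using x c by (simp add: Rset_def y_def abs_mult divide_le_eq)
    moreover have "\<bar>y $ j\<bar> \<le> real l * (1 - \<bar>y $ k\<bar>)" if j: "j \<noteq> k" for j
    proof -
      have "\<bar>x $ j\<bar> \<le> real l * (c - \<bar>x $ k\<bar>)" using x j by (simp add: Rset_def)
      hence "\<bar>x $ j\<bar> / c \<le> real l * (c - \<bar>x $ k\<bar>) / c" using c by (simp add: divide_right_mono)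
      thus ?thesis using c by (simp add: y_def abs_mult field_simps)
    qed
    ultimately have "y \<in> Rset k l 1" by (simp add: Rset_def)
    moreover have "x = c *\<^sub>R y" using c by (simp add: y_def)
    ultimately show "x \<in> (\<lambda>v. c *\<^sub>R v) ` Rset k l 1" by blast
  qed
qed

definition Tset :: "'n::finite \<Rightarrow> nat \<Rightarrow> nat \<Rightarrow> ('n \<Rightarrow> int) set" where
  "Tset k l s = {f. \<bar>f k\<bar> \<le> int s \<and> (\<forall>j. j \<noteq> k \<longrightarrow> \<bar>f j\<bar> \<le> int l * (int s - \<bar>f k\<bar>))}"

lemma lat_eq: "Rset k l (real s) \<inter> int_lattice = (\<lambda>f. \<chi> j. real_of_int (f j)) ` Tset k l s"
proof (intro set_eqI iffI)
  fix x :: "real ^ 'a" assume x: "x \<in> Rset k l (real s) \<inter> int_lattice"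
  define f where "f j = \<lfloor>x $ j\<rfloor>" for j
  have fx: "real_of_int (f j) = x $ j" for j
    using x unfolding int_lattice_def f_def by (auto elim!: Ints_cases)
  have "x = (\<chi> j. real_of_int (f j))" by (simp add: vec_eq_iff fx)
  moreover have "f \<in> Tset k l s"
  proof -
    have "real_of_int \<bar>f k\<bar> \<le> real_of_int (int s)" using x fx[of k] by (simp add: Rset_def)
    hence 1: "\<bar>f k\<bar> \<le> int s" by linarith
    have "real_of_int \<bar>f j\<bar> \<le> real_of_int (int l * (int s - \<bar>f k\<bar>))" if "j \<noteq> k" for j
      using x that fx[of k] fx[of j] by (simp add: Rset_def)
    hence "\<bar>f j\<bar> \<le> int l * (int s - \<bar>f k\<bar>)" if "j \<noteq> k" for j
      using that of_int_le_iff by blast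
    thus ?thesis using 1 by (simp add: Tset_def)
  qed
  ultimately show "x \<in> (\<lambda>f. \<chi> j. real_of_int (f j)) ` Tset k l s" by blast
next
  fix x :: "real ^ 'a" assume "x \<in> (\<lambda>f. \<chi> j. real_of_int (f j)) ` Tset k l s"
  then obtain f where f: "f \<in> Tset k l s" and x: "x = (\<chi> j. real_of_int (f j))" by auto
  have "x \<in> int_lattice" by (simp add: x int_lattice_def)
  moreover have "x \<in> Rset k l (real s)"
  proof -
    have "\<bar>f k\<bar> \<le> int s" using f by (simp add: Tset_def)
    hence "real_of_int \<bar>f k\<bar> \<le> real_of_int (int s)" using of_int_le_iff by blast
    hence 1: "\<bar>x $ k\<bar> \<le> real s" by (simp add: x)
    have "\<bar>x $ j\<bar> \<le> real l * (real s - \<bar>x $ k\<bar>)" if "j \<noteq> k" for j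
    proof -
      have "\<bar>f j\<bar> \<le> int l * (int s - \<bar>f k\<bar>)" using f that by (simp add: Tset_def)
      hence "real_of_int \<bar>f j\<bar> \<le> real_of_int (int l * (int s - \<bar>f k\<bar>))" using of_int_le_iff by blast
      thus ?thesis by (simp add: x)
    qed
    thus ?thesis using 1 by (simp add: Rset_def)
  qed
  ultimately show "x \<in> Rset k l (real s) \<inter> int_lattice" by blast
qed

lemma card_lat: "card (Rset k l (real s) \<inter> int_lattice) = card (Tset k l s)"
proof -
  have "inj_on (\<lambda>f::'a \<Rightarrow> int. \<chi> j. real_of_int (f j)) (Tset k l s)"
    by (auto simp: inj_on_def vec_eq_iff fun_eq_iff)
  thus ?thesis unfolding lat_eq by (rule card_image)
qed

lemma card_Tset:
  fixes k :: "'a::finite"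
  shows "real (card (Tset k l s)) = (\<Sum>h\<in>{-int s..int s}. (2 * real l * (real s - real_of_int \<bar>h\<bar>) + 1) ^ (CARD('a) - 1))"
proof -
  define M where "M h = int l * (int s - \<bar>h\<bar>)" for h
  define Sig where "Sig = Sigma {-int s..int s} (\<lambda>h. PiE (-{k}) (\<lambda>_. {-M h..M h}))"
  have bij: "bij_betw (\<lambda>f. (f k, restrict f (-{k}))) (Tset k l s) Sig"
  proof (rule bij_betw_byWitness[where f' = "\<lambda>(h, g). g(k := h)"])
    show "\<forall>f\<in>Tset k l s. (\<lambda>(h, g). g(k := h)) (f k, restrict f (- {k})) = f"
      by (auto simp: fun_eq_iff)
    show "\<forall>a'\<in>Sig. (\<lambda>f. (f k, restrict f (- {k}))) ((\<lambda>(h, g). g(k := h)) a') = a'"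
      by (auto simp: Sig_def fun_eq_iff PiE_def extensional_def)
    show "(\<lambda>f. (f k, restrict f (- {k}))) ` Tset k l s \<subseteq> Sig"
      by (auto simp: Sig_def Tset_def M_def abs_le_iff split: if_splits)
    show "(\<lambda>(h, g). g(k := h)) ` Sig \<subseteq> Tset k l s"
      by (auto simp: Sig_def Tset_def M_def PiE_def Pi_def)
  qed
  have cC: "card (-{k}) = CARD('a) - 1"
    by (simp add: Compl_eq_Diff_UNIV card_Diff_singleton)
  have "card (Tset k l s) = card Sig" using bij by (rule bij_betw_same_card)
  also have "\<dots> = (\<Sum>h\<in>{-int s..int s}. card (PiE (-{k}) (\<lambda>_. {-M h..M h})))"
    unfolding Sig_def by (rule card_SigmaI) (auto intro!: finite_PiE)
  also have "\<dots> = (\<Sum>h\<in>{-int s..int s}. nat (2 * M h + 1) ^ (CARD('a) - 1))"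
    by (intro sum.cong refl) (simp add: card_PiE cC)
  finally have "real (card (Tset k l s)) = (\<Sum>h\<in>{-int s..int s}. real (nat (2 * M h + 1)) ^ (CARD('a) - 1))"
    by simp
  also have "\<dots> = (\<Sum>h\<in>{-int s..int s}. (2 * real l * (real s - real_of_int \<bar>h\<bar>) + 1) ^ (CARD('a) - 1))"
  proof (intro sum.cong refl)
    fix h assume "h \<in> {-int s..int s}"
    hence "M h \<ge> 0" by (auto simp: M_def)
    hence "real (nat (2 * M h + 1)) = real_of_int (2 * M h + 1)" by simp
    also have "\<dots> = 2 * real l * (real s - real_of_int \<bar>h\<bar>) + 1" by (simp add: M_def)
    finally show "real (nat (2 * M h + 1)) ^ (CARD('a) - 1) = (2 * real l * (real s - real_of_int \<bar>h\<bar>) + 1) ^ (CARD('a) - 1)"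
      by simp
  qed
  finally show ?thesis .
qed

lemma sym_sum:
  fixes \<phi> :: "nat \<Rightarrow> real"
  shows "(\<Sum>h\<in>{-int s..int s}. \<phi> (nat \<bar>h\<bar>)) = \<phi> 0 + 2 * (\<Sum>m\<in>{1..s}. \<phi> m)"
proof (induction s)
  case 0
  then show ?case by simp
next
  case (Suc s)
  have eq: "{-int (Suc s)..int (Suc s)} = insert (int (Suc s)) (insert (-int (Suc s)) {-int s..int s})"
    by auto
  have "(\<Sum>h\<in>{-int (Suc s)..int (Suc s)}. \<phi> (nat \<bar>h\<bar>))
      = \<phi> (Suc s) + (\<phi> (Suc s) + (\<Sum>h\<in>{-int s..int s}. \<phi> (nat \<bar>h\<bar>)))"
  proof -
    have n1: "nat (1 + int s) = Suc s" "nat (int s + 1) = Suc s" by auto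
    show ?thesis unfolding eq by (simp add: n1)
  qed
  also have "\<dots> = \<phi> 0 + 2 * (\<Sum>m\<in>{1..Suc s}. \<phi> m)"
    using Suc by simp
  finally show ?case .
qed

lemma count_formula:
  fixes k :: "'a::finite"
  shows "real (lattice_count ((\<lambda>v. real s *\<^sub>R v) ` Q_poly k l))
     = (2 * real l * real s + 1) ^ (CARD('a) - 1) + 2 * (\<Sum>m<s. (2 * real l * real m + 1) ^ (CARD('a) - 1))"
proof -
  define \<phi> where "\<phi> m = (2 * real l * (real s - real m) + 1) ^ (CARD('a) - 1)" for m
  have "real (lattice_count ((\<lambda>v. real s *\<^sub>R v) ` Q_poly k l)) = real (card (Tset k l s))"
    unfolding lattice_count_def Q_eq scale_Rset card_lat ..
  also have "\<dots> = (\<Sum>h\<in>{-int s..int s}. \<phi> (nat \<bar>h\<bar>))"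
    unfolding card_Tset \<phi>_def by (intro sum.cong refl) simp
  also have "\<dots> = \<phi> 0 + 2 * (\<Sum>m\<in>{1..s}. \<phi> m)" by (rule sym_sum)
  also have "(\<Sum>m\<in>{1..s}. \<phi> m) = (\<Sum>m<s. (2 * real l * real m + 1) ^ (CARD('a) - 1))"
    by (rule sum.reindex_bij_witness[where i = "\<lambda>m. s - m" and j = "\<lambda>m. s - m"])
       (auto simp: \<phi>_def of_nat_diff)
  finally show ?thesis by (simp add: \<phi>_def)
qed

lemma ehrhart_eq:
  fixes k :: "'a::finite"
  assumes card: "CARD('a) = Suc p"
  assumes h: "\<And>s::nat. (2 * real l * real s + 1) ^ p + 2 * (\<Sum>m<s. (2 * real l * real m + 1) ^ p)
             = (\<Sum>i\<le>Suc p. a i * real s ^ i)"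
  assumes i: "i \<le> CARD('a)"
  shows "ehrhart_coeff (Q_poly k l) i = a i"
proof -
  have cnt: "real (lattice_count ((\<lambda>v. real s *\<^sub>R v) ` Q_poly k l)) = (\<Sum>j\<le>CARD('a). a j * real s ^ j)" for s :: nat
    using count_formula[of s k l] h[of s] card by simp
  show ?thesis unfolding ehrhart_coeff_def
  proof (rule the_equality)
    show "\<exists>a'. (\<forall>s::nat. real (lattice_count ((\<lambda>v. real s *\<^sub>R v) ` Q_poly k l)) = (\<Sum>j\<le>CARD('a). a' j * real s ^ j)) \<and> a' i = a i"
      using cnt by blast
  next
    fix c assume "\<exists>a'. (\<forall>s::nat. real (lattice_count ((\<lambda>v. real s *\<^sub>R v) ` Q_poly k l)) = (\<Sum>j\<le>CARD('a). a' j * real s ^ j)) \<and> a' i = c"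
    then obtain a' where a': "\<And>s::nat. real (lattice_count ((\<lambda>v. real s *\<^sub>R v) ` Q_poly k l)) = (\<Sum>j\<le>CARD('a). a' j * real s ^ j)"
      and c: "a' i = c" by blast
    have "a' i = a i"
      by (rule coeffs_unique[where N = "CARD('a)"]) (use a' cnt i in auto)
    thus "c = a i" using c by simp
  qed
qed

lemma Q_cube: "x \<in> Q_poly k l \<Longrightarrow> 1 \<le> l \<Longrightarrow> \<bar>x $ i\<bar> \<le> real l"
proof -
  assume x: "x \<in> Q_poly k l" and l: "1 \<le> l"
  hence xk: "\<bar>x $ k\<bar> \<le> 1" by (simp add: Q_eq Rset_def)
  show ?thesis
  proof (cases "i = k")
    case True thus ?thesis using xk l by simp
  next
    case False
    hence "\<bar>x $ i\<bar> \<le> real l * (1 - \<bar>x $ k\<bar>)" using x by (simp add: Q_eq Rset_def)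
    also have "\<dots> \<le> real l * 1" by (intro mult_left_mono) auto
    finally show ?thesis by simp
  qed
qed

lemma axis_in_Q: "1 \<le> l \<Longrightarrow> axis i 1 \<in> Q_poly k l"
  by (auto simp: Q_eq Rset_def axis_def)

lemma zero_in_Q: "0 \<in> Q_poly k l"
  by (auto simp: Q_eq Rset_def)

lemma succ_min_lower:
  fixes k :: "'a::finite"
  assumes l: "1 \<le> l" and j: "1 \<le> j" "j \<le> CARD('a)"
  shows "1 / (2 * real l) \<le> succ_min (diff_body (Q_poly k l)) j"
proof -
  define D where "D = diff_body (Q_poly k l)"
  define S where "S = {t. t > 0 \<and> aff_dim (((\<lambda>v. t *\<^sub>R v) ` D) \<inter> int_lattice) \<ge> int j}"
  have Dcube: "\<bar>x $ i\<bar> \<le> 2 * real l" if "x \<in> D" for x i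
  proof -
    obtain y z where "x = y - z" "y \<in> Q_poly k l" "z \<in> Q_poly k l" using \<open>x \<in> D\<close> by (auto simp: D_def diff_body_def)
    moreover have "\<bar>y $ i - z $ i\<bar> \<le> \<bar>y $ i\<bar> + \<bar>z $ i\<bar>" by (rule abs_triangle_ineq4)
    ultimately show ?thesis using Q_cube[OF _ l, of y k i] Q_cube[OF _ l, of z k i] by simp
  qed
  have ne: "1 \<in> S"
  proof -
    have B: "Basis \<subseteq> D \<inter> int_lattice"
    proof
      fix b :: "real ^ 'a" assume "b \<in> Basis"
      then obtain i where b: "b = axis i 1" using axis_inverse by blast
      have "b - 0 \<in> D" unfolding D_def diff_body_def using axis_in_Q[OF l, of i k] zero_in_Q b by blast
      moreover have "b \<in> int_lattice" by (auto simp: b int_lattice_def axis_def)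
      ultimately show "b \<in> D \<inter> int_lattice" by simp
    qed
    have "0 \<in> D \<inter> int_lattice"
      unfolding D_def diff_body_def int_lattice_def using zero_in_Q by force
    hence "aff_dim (D \<inter> int_lattice) = int (dim ((+) (- 0) ` (D \<inter> int_lattice)))"
      by (intro aff_dim_eq_dim hull_inc)
    also have "\<dots> = int (dim (D \<inter> int_lattice))" by simp
    also have "dim (D \<inter> int_lattice) = DIM(real ^ 'a)"
    proof -
      have "span Basis \<subseteq> span (D \<inter> int_lattice)" using B by (rule span_mono)
      hence "span (D \<inter> int_lattice) = UNIV" by auto
      thus ?thesis using dim_eq_full by blast
    qed
    finally have "aff_dim (D \<inter> int_lattice) = int CARD('a)" by simp
    thus ?thesis using j by (simp add: S_def)
  qed
  have lb: "1 / (2 * real l) \<le> t" if t: "t \<in> S" for t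
  proof (rule ccontr)
    assume "\<not> 1 / (2 * real l) \<le> t"
    hence tl: "t < 1 / (2 * real l)" by simp
    have tpos: "t > 0" using t by (simp add: S_def)
    have "((\<lambda>v. t *\<^sub>R v) ` D) \<inter> int_lattice \<subseteq> {0}"
    proof
      fix y assume "y \<in> ((\<lambda>v. t *\<^sub>R v) ` D) \<inter> int_lattice"
      then obtain x where x: "x \<in> D" and y: "y = t *\<^sub>R x" and yZ: "y \<in> int_lattice" by auto
      have "y $ i = 0" for i
      proof -
        have "\<bar>y $ i\<bar> = t * \<bar>x $ i\<bar>" using y tpos by (simp add: abs_mult)
        also have "\<dots> \<le> t * (2 * real l)" using Dcube[OF x] tpos by (intro mult_left_mono) auto
        also have "\<dots> < 1" using tl l by (simp add: field_simps)
        finally have "\<bar>y $ i\<bar> < 1" .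
        moreover have "y $ i \<in> \<int>" using yZ by (simp add: int_lattice_def)
        ultimately show ?thesis using Ints_nonzero_abs_less1 by blast
      qed
      thus "y \<in> {0}" by (simp add: vec_eq_iff)
    qed
    hence "aff_dim (((\<lambda>v. t *\<^sub>R v) ` D) \<inter> int_lattice) \<le> aff_dim {0::real^'a}" by (rule aff_dim_subset)
    hence "aff_dim (((\<lambda>v. t *\<^sub>R v) ` D) \<inter> int_lattice) \<le> 0" by simp
    thus False using t j by (simp add: S_def)
  qed
  have "1 / (2 * real l) \<le> Inf S"
    by (rule cInf_greatest) (use ne lb in auto)
  thus ?thesis by (simp add: succ_min_def S_def D_def)
qed

lemma elem_sym_bound:
  assumes x: "\<And>j. j \<in> {1..n} \<Longrightarrow> 0 \<le> x j \<and> x j \<le> B"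
  shows "0 \<le> elem_sym n x i \<and> elem_sym n x i \<le> real (n choose i) * B ^ i"
proof -
  define F where "F = {I. I \<subseteq> {1..n} \<and> card I = i}"
  have cF: "card F = n choose i" unfolding F_def using n_subsets[of "{1..n}" i] by simp
  have pr: "0 \<le> (\<Prod>j\<in>I. x j) \<and> (\<Prod>j\<in>I. x j) \<le> B ^ i" if "I \<in> F" for I
  proof -
    have I: "I \<subseteq> {1..n}" "card I = i" using that by (auto simp: F_def)
    have "0 \<le> (\<Prod>j\<in>I. x j)" using I x by (intro prod_nonneg) auto
    moreover have "(\<Prod>j\<in>I. x j) \<le> (\<Prod>j\<in>I. B)" using I x by (intro prod_mono) auto
    ultimately show ?thesis using I by simp
  qed
  have "0 \<le> elem_sym n x i" unfolding elem_sym_def F_def[symmetric] using pr by (intro sum_nonneg) auto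
  moreover have "elem_sym n x i \<le> real (card F) * B ^ i"
    unfolding elem_sym_def F_def[symmetric] using pr by (intro sum_bounded_above) auto
  ultimately show ?thesis using cF by simp
qed

lemma sigma_bound:
  fixes k :: "'a::finite"
  assumes l: "1 \<le> l"
  shows "0 \<le> sigma_sm (Q_poly k l) i \<and> sigma_sm (Q_poly k l) i \<le> real (CARD('a) choose i) * (2 * real l) ^ i"
  unfolding sigma_sm_def
proof (rule elem_sym_bound)
  fix j assume j: "j \<in> {1..CARD('a)}"
  have lb: "1 / (2 * real l) \<le> succ_min (diff_body (Q_poly k l)) j"
    using succ_min_lower[OF l, of j k] j by auto
  have pos: "0 < 1 / (2 * real l)" using l by simp
  hence sp: "0 < succ_min (diff_body (Q_poly k l)) j" using lb by linarith
  have "1 / succ_min (diff_body (Q_poly k l)) j \<le> 2 * real l"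
    using lb sp l by (simp add: divide_le_eq field_simps)
  thus "0 \<le> 1 / succ_min (diff_body (Q_poly k l)) j \<and> 1 / succ_min (diff_body (Q_poly k l)) j \<le> 2 * real l"
    using sp by simp
qed

lemma final_ineq:
  fixes u V g \<sigma> B c :: real
  assumes "0 < V" "V * u / 3 \<le> g" "0 \<le> \<sigma>" "\<sigma> \<le> B * V" "3 * \<bar>c\<bar> * B < u"
  shows "c * \<sigma> < g"
proof -
  have "c * \<sigma> \<le> \<bar>c\<bar> * \<sigma>" using assms(3) by (intro mult_right_mono) auto
  also have "\<dots> \<le> \<bar>c\<bar> * (B * V)" using assms(4) by (intro mult_left_mono) auto
  also have "\<dots> = (3 * \<bar>c\<bar> * B) * V / 3" by simp
  also have "\<dots> < u * V / 3" using assms(1,5) by (intro divide_strict_right_mono mult_strict_right_mono) auto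
  also have "\<dots> \<le> g" using assms(2) by (simp add: mult.commute)
  finally show ?thesis .
qed

lemma part1:
  fixes k :: "'a::finite"
  assumes card: "CARD('a) = Suc (Suc (Suc q))"
  shows "\<forall>c::real. \<exists>l::nat. l \<ge> 1 \<and>
            ehrhart_coeff (Q_poly k l) (CARD('a) - 2) > c * sigma_sm (Q_poly k l) (CARD('a) - 2)"
proof
  fix c :: real
  define B where "B = real (CARD('a) choose Suc q)"
  obtain N :: nat where N: "3 * \<bar>c\<bar> * B < real N" using reals_Archimedean2 by blast
  define l where "l = Suc N"
  define u where "u = 2 * real l"
  have l1: "1 \<le> l" by (simp add: l_def)
  have upos: "0 < u" by (simp add: u_def l_def)
  have uN: "3 * \<bar>c\<bar> * B < u" using N by (simp add: u_def l_def)
  obtain a where h: "\<And>s::nat. (u * real s + 1) ^ Suc (Suc q) + 2 * (\<Sum>m<s. (u * real m + 1) ^ Suc (Suc q))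
             = (\<Sum>i\<le>Suc (Suc (Suc q)). a i * real s ^ i)"
    using G_poly_exists[of u "Suc (Suc q)"] by blast
  have g: "ehrhart_coeff (Q_poly k l) (CARD('a) - 2) = a (Suc q)"
    using ehrhart_eq[OF card, of l a "CARD('a) - 2" k] h card by (simp add: u_def)
  have av: "a (Suc q) = real (q + 2) * u ^ q * (u ^ 2 / 6 + 1)" by (rule coeff_nm2[OF h])
  have sb: "0 \<le> sigma_sm (Q_poly k l) (Suc q) \<and> sigma_sm (Q_poly k l) (Suc q) \<le> B * u ^ Suc q"
    using sigma_bound[OF l1, of k "Suc q"] by (simp add: B_def u_def)
  have Vpos: "0 < u ^ Suc q" using upos by simp
  have gl: "u ^ Suc q * u / 3 \<le> a (Suc q)"
  proof -
    have "u ^ 2 / 3 \<le> real (q + 2) * (u ^ 2 / 6 + 1)"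
    proof -
      have "u ^ 2 / 3 \<le> 2 * (u ^ 2 / 6 + 1)" by simp
      also have "\<dots> \<le> real (q + 2) * (u ^ 2 / 6 + 1)" by (intro mult_right_mono) auto
      finally show ?thesis .
    qed
    hence "u ^ q * (u ^ 2 / 3) \<le> u ^ q * (real (q + 2) * (u ^ 2 / 6 + 1))"
      using upos by (intro mult_left_mono) auto
    moreover have "u ^ Suc q * u / 3 = u ^ q * (u ^ 2 / 3)" by (simp add: power2_eq_square)
    ultimately show ?thesis unfolding av by (simp only: mult_ac)
  qed
  have "c * sigma_sm (Q_poly k l) (Suc q) < a (Suc q)"
    using final_ineq[OF Vpos gl _ _ uN] sb by blast
  thus "\<exists>l::nat. l \<ge> 1 \<and> ehrhart_coeff (Q_poly k l) (CARD('a) - 2) > c * sigma_sm (Q_poly k l) (CARD('a) - 2)"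
    using l1 g card by auto
qed

lemma part2:
  fixes k :: "'a::finite"
  assumes card: "CARD('a) = Suc (Suc (Suc (Suc q)))"
  shows "\<forall>c::real. \<exists>l::nat. l \<ge> 1 \<and>
            ehrhart_coeff (Q_poly k l) (CARD('a) - 3) > c * sigma_sm (Q_poly k l) (CARD('a) - 3)"
proof
  fix c :: real
  define B where "B = real (CARD('a) choose Suc q)"
  obtain N :: nat where N: "3 * \<bar>c\<bar> * B < real N" using reals_Archimedean2 by blast
  define l where "l = Suc N"
  define u where "u = 2 * real l"
  have l1: "1 \<le> l" by (simp add: l_def)
  have upos: "0 < u" by (simp add: u_def l_def)
  have uN: "3 * \<bar>c\<bar> * B < u" using N by (simp add: u_def l_def)
  obtain a where h: "\<And>s::nat. (u * real s + 1) ^ Suc (Suc (Suc q)) + 2 * (\<Sum>m<s. (u * real m + 1) ^ Suc (Suc (Suc q)))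
             = (\<Sum>i\<le>Suc (Suc (Suc (Suc q))). a i * real s ^ i)"
    using G_poly_exists[of u "Suc (Suc (Suc q))"] by blast
  have g: "ehrhart_coeff (Q_poly k l) (CARD('a) - 3) = a (Suc q)"
    using ehrhart_eq[OF card, of l a "CARD('a) - 3" k] h card by (simp add: u_def)
  have av: "a (Suc q) = real (q + 3) * real (q + 2) * u ^ q * (u ^ 2 / 6 + 1 / 3)" by (rule coeff_nm3[OF h])
  have sb: "0 \<le> sigma_sm (Q_poly k l) (Suc q) \<and> sigma_sm (Q_poly k l) (Suc q) \<le> B * u ^ Suc q"
    using sigma_bound[OF l1, of k "Suc q"] by (simp add: B_def u_def)
  have Vpos: "0 < u ^ Suc q" using upos by simp
  have gl: "u ^ Suc q * u / 3 \<le> a (Suc q)"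
  proof -
    have "u ^ 2 / 3 \<le> real (q + 3) * real (q + 2) * (u ^ 2 / 6 + 1 / 3)"
    proof -
      have "u ^ 2 / 3 \<le> 2 * (u ^ 2 / 6 + 1 / 3)" by simp
      also have "\<dots> \<le> (real (q + 3) * real (q + 2)) * (u ^ 2 / 6 + 1 / 3)"
      proof (intro mult_right_mono)
        have "1 * 2 \<le> real (q + 3) * real (q + 2)" by (intro mult_mono) auto
        thus "2 \<le> real (q + 3) * real (q + 2)" by simp
      qed auto
      finally show ?thesis by simp
    qed
    hence "u ^ q * (u ^ 2 / 3) \<le> u ^ q * (real (q + 3) * real (q + 2) * (u ^ 2 / 6 + 1 / 3))"
      using upos by (intro mult_left_mono) auto
    moreover have "u ^ Suc q * u / 3 = u ^ q * (u ^ 2 / 3)" by (simp add: power2_eq_square)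
    ultimately show ?thesis unfolding av by (simp only: mult_ac)
  qed
  have "c * sigma_sm (Q_poly k l) (Suc q) < a (Suc q)"
    using final_ineq[OF Vpos gl _ _ uN] sb by blast
  thus "\<exists>l::nat. l \<ge> 1 \<and> ehrhart_coeff (Q_poly k l) (CARD('a) - 3) > c * sigma_sm (Q_poly k l) (CARD('a) - 3)"
    using l1 g card by auto
qed

theorem proposition1p3:
  fixes k :: "'n::finite"
  assumes "CARD('n) \<ge> 3"
  shows "(\<forall>c::real. \<exists>l::nat. l \<ge> 1 \<and>
            ehrhart_coeff (Q_poly k l) (CARD('n) - 2) > c * sigma_sm (Q_poly k l) (CARD('n) - 2))
       \<and> (CARD('n) \<ge> 4 \<longrightarrow> (\<forall>c::real. \<exists>l::nat. l \<ge> 1 \<and>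
            ehrhart_coeff (Q_poly k l) (CARD('n) - 3) > c * sigma_sm (Q_poly k l) (CARD('n) - 3)))"
  proof
  have "CARD('n) = Suc (Suc (Suc (CARD('n) - 3)))" using assms by simp
  thus "\<forall>c::real. \<exists>l::nat. l \<ge> 1 \<and>
            ehrhart_coeff (Q_poly k l) (CARD('n) - 2) > c * sigma_sm (Q_poly k l) (CARD('n) - 2)"
    by (rule part1)
next
  show "CARD('n) \<ge> 4 \<longrightarrow> (\<forall>c::real. \<exists>l::nat. l \<ge> 1 \<and>
            ehrhart_coeff (Q_poly k l) (CARD('n) - 3) > c * sigma_sm (Q_poly k l) (CARD('n) - 3))"
  proof
    assume "CARD('n) \<ge> 4"
    hence "CARD('n) = Suc (Suc (Suc (Suc (CARD('n) - 4))))" by simp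
    thus "\<forall>c::real. \<exists>l::nat. l \<ge> 1 \<and>
            ehrhart_coeff (Q_poly k l) (CARD('n) - 3) > c * sigma_sm (Q_poly k l) (CARD('n) - 3)"
      by (rule part2)
  qed
qed

end
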